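(* Let $a,b\in\mathbb R$ be such that $\Gamma_{a,b}:y^2=x^3+ax^2+bx$ (projectively $Y^2Z=X^3+aX^2Z+bXZ^2$) is a non-singular cubic. If $A,\bar A,B$ are three points on $\Gamma_{a,b}$ lying on a straight line, then $A\#A=\bar B$.
   Context: On $\Gamma_{a,b}$ one uses the chord-tangent group law with neutral element the inflection point $\mathcal O=(0:1:0)$; $T=(0:0:1)$ is a point of order 2, and the conjugate of a point $P$ is $\bar P:=T+P$. For points $P,Q$ on the curve, $P\#Q$ is the third intersection point (with multiplicity) of the line $PQ$ with the curve, where for $P=Q$ the line is the tangent at $P$; thus $P\#Q=-(P+Q)$, and $A\#A$ is the second intersection of the tangent at $A$ with the curve. *)

theory Defs
  imports "HOL-Computational_Algebra.Polynomial" "HOL-Library.Multiset"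
begin

text \<open>Points of the projective closure of y^2 = x^3 + a x^2 + b x over the reals:
  the affine points (x,y) and the unique point at infinity O = (0:1:0).\<close>
datatype point = Inf | Aff real real

definition cubic_rhs :: "real \<Rightarrow> real \<Rightarrow> real \<Rightarrow> real" where
  "cubic_rhs a b x = x^3 + a * x^2 + b * x"

fun on_curve :: "real \<Rightarrow> real \<Rightarrow> point \<Rightarrow> bool" where
  "on_curve a b Inf = True"
| "on_curve a b (Aff x y) = (y^2 = cubic_rhs a b x)"

text \<open>Non-singularity: no affine singular point (the point at infinity is always smooth).\<close>
definition nonsingular :: "real \<Rightarrow> real \<Rightarrow> bool" where
  "nonsingular a b \<longleftrightarrow> (\<forall>x y. y^2 = cubic_rhs a b x \<longrightarrow>
       (2 * y \<noteq> 0 \<or> 3 * x^2 + 2 * a * x + b \<noteq> 0))"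

text \<open>Projective lines: Y = mX + cZ (non-vertical), X = x0 Z (vertical), Z = 0 (line at infinity).\<close>
datatype line = NonVert real real | Vert real | LInf

text \<open>Intersection multiplicity of a line with the curve at a point (0 if the point is not
  on both). For a non-vertical line it is the multiplicity of x as root of
  x^3+ax^2+bx-(mx+c)^2; for a vertical line x = x0 it is the multiplicity of y as root of
  y^2 - (x0^3+a x0^2+b x0) at affine points and 1 at O; the line at infinity meets the
  curve only at the inflection point O, with multiplicity 3.\<close>
fun imult :: "real \<Rightarrow> real \<Rightarrow> line \<Rightarrow> point \<Rightarrow> nat" where
  "imult a b (NonVert m c) (Aff x y) =
     (if y = m * x + c then order x [: - (c^2), b - 2 * m * c, a - m^2, 1 :] else 0)"
| "imult a b (NonVert m c) Inf = 0"
| "imult a b (Vert x0) (Aff x y) =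
     (if x = x0 then order y [: - cubic_rhs a b x0, 0, 1 :] else 0)"
| "imult a b (Vert x0) Inf = 1"
| "imult a b LInf (Aff x y) = 0"
| "imult a b LInf Inf = 3"

text \<open>P # Q: the third intersection point (with multiplicity) of the line PQ (the tangent
  at P if P = Q) with the curve, i.e. the point R such that some line meets the curve
  exactly in P, Q, R counted with multiplicity.\<close>
definition sharp :: "real \<Rightarrow> real \<Rightarrow> point \<Rightarrow> point \<Rightarrow> point" where
  "sharp a b P Q = (THE R. \<exists>L. \<forall>X. imult a b L X = count {#P, Q, R#} X)"

definition cadd :: "real \<Rightarrow> real \<Rightarrow> point \<Rightarrow> point \<Rightarrow> point" where
  "cadd a b P Q = sharp a b Inf (sharp a b P Q)"

definition T_pt :: point where "T_pt = Aff 0 0"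

definition conj_pt :: "real \<Rightarrow> real \<Rightarrow> point \<Rightarrow> point" where
  "conj_pt a b P = cadd a b T_pt P"

end

theory Submission
  imports Defs
begin

lemma order_lin: "order x [:-r, 1:] = (if x = r then 1 else (0::nat))" for x r :: real
proof (cases "x = r")
  case True
  then show ?thesis using order_power_n_n[of r 1] by simp
next
  case False
  then show ?thesis by (simp add: order_0I)
qed

lemma order_cubic:
  "order x ([:-r1, 1:] * [:-r2, 1:] * [:-r3, 1:]) = count {#r1, r2, r3#} x" for x r1 r2 r3 :: real
proof -
  have nz: "[:-r1, 1:] * [:-r2, 1:] * [:-r3, 1:] \<noteq> (0::real poly)" by (simp add: no_zero_divisors)
  have nz2: "[:-r1, 1:] * [:-r2, 1:] \<noteq> (0::real poly)" by (simp add: no_zero_divisors)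
  show ?thesis
    apply (subst order_mult[OF nz])
    apply (subst order_mult[OF nz2])
    by (simp add: order_lin)
qed

lemma ord_ge1: "p \<noteq> 0 \<Longrightarrow> order x p \<ge> 1 \<Longrightarrow> poly p x = 0" for p :: "real poly"
  using order_root by fastforce

lemma ord_ge2: "p \<noteq> 0 \<Longrightarrow> pderiv p \<noteq> 0 \<Longrightarrow> order x p \<ge> 2 \<Longrightarrow> poly (pderiv p) x = 0" for p :: "real poly"
proof -
  assume a: "p \<noteq> 0" "pderiv p \<noteq> 0" "order x p \<ge> 2"
  then have r: "poly p x = 0" using ord_ge1 by simp
  have "order x p = Suc (order x (pderiv p))" using order_pderiv[OF a(1) r] .
  then have "order x (pderiv p) \<ge> 1" using a(3) by simp
  then show ?thesis using ord_ge1 a(2) by simp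
qed

lemma cubic_poly_eq:
  assumes "p = -(r1+r2+r3)" "q = r1*r2+r1*r3+r2*r3" "r = -(r1*r2*r3)"
  shows "[:r, q, p, 1:] = [:-r1, 1:] * [:-r2, 1:] * [:-r3, (1::real):]"
  using assms by (simp add: algebra_simps)

lemma imult_nonvert:
  assumes "a - m^2 = -(x1+x2+x3)" "b - 2*m*c = x1*x2+x1*x3+x2*x3" "-(c^2) = -(x1*x2*x3)"
    "y1 = m*x1+c" "y2 = m*x2+c" "y3 = m*x3+c"
  shows "imult a b (NonVert m c) X = count {#Aff x1 y1, Aff x2 y2, Aff x3 y3#} X"
proof (cases X)
  case Inf
  then show ?thesis by simp
next
  case (Aff x y)
  have P: "[: - (c^2), b - 2 * m * c, a - m^2, 1 :] = [:-x1, 1:] * [:-x2, 1:] * [:-x3, (1::real):]"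
    by (rule cubic_poly_eq) (use assms in auto)
  show ?thesis
  proof (cases "y = m*x+c")
    case True
    have o: "order x [: - (c^2), b - 2 * m * c, a - m^2, 1 :] = count {#x1, x2, x3#} x"
      unfolding P by (rule order_cubic)
    have c: "count {#Aff x1 y1, Aff x2 y2, Aff x3 y3#} (Aff x y) = count {#x1, x2, x3#} x"
      using True assms(4-6) by auto
    show ?thesis using True Aff o c by simp
  next
    case False
    then show ?thesis using Aff assms(4-6) by auto
  qed
qed

lemma imult_vert:
  assumes "y0^2 = cubic_rhs a b x0"
  shows "imult a b (Vert x0) X = count {#Inf, Aff x0 y0, Aff x0 (-y0)#} X"
proof (cases X)
  case Inf
  then show ?thesis by simp
next
  case (Aff x y)
  have P: "[: - cubic_rhs a b x0, 0, 1 :] = [:-y0, 1:] * [:-(-y0), (1::real):]"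
    using assms by (simp add: algebra_simps power2_eq_square)
  have nz: "[:-y0, 1:] * [:-(-y0), (1::real):] \<noteq> 0" by (simp add: no_zero_divisors)
  have "order y [: - cubic_rhs a b x0, 0, 1 :] = count {#y0, -y0#} y"
    unfolding P apply (subst order_mult[OF nz]) apply (simp only: order_lin) by simp
  then show ?thesis using Aff by auto
qed

lemma imult_linf: "imult a b LInf X = count {#Inf, Inf, Inf#} X"
  by (cases X) auto

lemma nv_ge1:
  assumes "imult a b (NonVert m c) (Aff x y) \<ge> 1"
  shows "y = m*x+c" "y^2 = cubic_rhs a b x"
proof -
  show y: "y = m*x+c" using assms by (auto split: if_splits)
  have "poly [: - (c^2), b - 2 * m * c, a - m^2, 1 :] x = 0"
    by (rule ord_ge1) (use assms y in auto)
  then show "y^2 = cubic_rhs a b x" using y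
    by (simp add: cubic_rhs_def algebra_simps power2_eq_square power3_eq_cube)
qed

lemma nv_ge2:
  assumes "imult a b (NonVert m c) (Aff x y) \<ge> 2"
  shows "3*x^2 + 2*a*x + b = 2*m*y"
proof -
  have y: "y = m*x+c" using assms by (auto split: if_splits)
  have "poly (pderiv [: - (c^2), b - 2 * m * c, a - m^2, 1 :]) x = 0"
    by (rule ord_ge2) (use assms y in \<open>auto simp: pderiv_pCons\<close>)
  then show ?thesis using y
    by (simp add: pderiv_pCons algebra_simps power2_eq_square)
qed

lemma v_ge1:
  assumes "imult a b (Vert x0) (Aff x y) \<ge> 1"
  shows "x = x0"
  using assms by (auto split: if_splits)

lemma v_ge2:
  assumes "imult a b (Vert x0) (Aff x y) \<ge> 2"
  shows "y = 0"
proof -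
  have x: "x = x0" using assms by (auto split: if_splits)
  have "poly (pderiv [: - cubic_rhs a b x0, 0, 1 :]) y = 0"
    by (rule ord_ge2) (use assms x in \<open>auto simp: pderiv_pCons\<close>)
  then show ?thesis by (simp add: pderiv_pCons)
qed

lemma nonsing_pt:
  assumes "nonsingular a b" "y^2 = cubic_rhs a b x" "3*x^2 + 2*a*x + b = 2*m*y"
  shows "y \<noteq> 0"
  using assms unfolding nonsingular_def by force

definition thr :: "real \<Rightarrow> real \<Rightarrow> line \<Rightarrow> point \<Rightarrow> point \<Rightarrow> bool" where
  "thr a b L P Q \<longleftrightarrow> (\<forall>X. count {#P, Q#} X \<le> imult a b L X)"

lemma thr_D:
  assumes "thr a b L P Q"
  shows "imult a b L P \<ge> 1" "imult a b L Q \<ge> 1" "P = Q \<Longrightarrow> imult a b L P \<ge> 2"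
proof -
  have H: "\<forall>X. count {#P, Q#} X \<le> imult a b L X" using assms unfolding thr_def by simp
  have h1: "count {#P, Q#} P \<le> imult a b L P" using H by blast
  have h2: "count {#P, Q#} Q \<le> imult a b L Q" using H by blast
  have c1: "count {#P, Q#} P \<ge> 1" "count {#P, Q#} Q \<ge> 1" by auto
  show "imult a b L P \<ge> 1" "imult a b L Q \<ge> 1" using h1 h2 c1 by linarith+
  show "P = Q \<Longrightarrow> imult a b L P \<ge> 2"
  proof -
    assume "P = Q"
    then have "count {#P, Q#} P = 2" by simp
    then show ?thesis using h1 by linarith
  qed
qed

lemma line_unique:
  assumes ns: "nonsingular a b" and h1: "thr a b L1 P Q" and h2: "thr a b L2 P Q"
  shows "L1 = L2"
proof -
  note A = thr_D[OF h1] and B = thr_D[OF h2]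
  show ?thesis
  proof (cases P)
    case Inf
    show ?thesis
    proof (cases Q)
      case Inf
      then have "imult a b L1 Inf \<ge> 2" "imult a b L2 Inf \<ge> 2" using A(3) B(3) \<open>P = Inf\<close> by auto
      then show ?thesis by (cases L1; cases L2) simp_all
    next
      case (Aff x y)
      have i1: "imult a b L1 Inf \<ge> 1" "imult a b L1 (Aff x y) \<ge> 1" using A(1,2) \<open>P = Inf\<close> Aff by simp_all
      have "\<exists>x0. L1 = Vert x0" using i1 by (cases L1) simp_all
      then obtain x0 where L1: "L1 = Vert x0" by blast
      have i2: "imult a b L2 Inf \<ge> 1" "imult a b L2 (Aff x y) \<ge> 1" using B(1,2) \<open>P = Inf\<close> Aff by simp_all
      have "\<exists>x0. L2 = Vert x0" using i2 by (cases L2) simp_all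
      then obtain x0' where L2: "L2 = Vert x0'" by blast
      have "x = x0" using v_ge1[of a b x0 x y] i1(2) L1 by blast
      moreover have "x = x0'" using v_ge1[of a b x0' x y] i2(2) L2 by blast
      ultimately show ?thesis using L1 L2 by simp
    qed
  next
    case (Aff x1 y1)
    note P = this
    show ?thesis
    proof (cases Q)
      case Inf
      have i1: "imult a b L1 Inf \<ge> 1" "imult a b L1 (Aff x1 y1) \<ge> 1" using A(1,2) P Inf by simp_all
      have "\<exists>x0. L1 = Vert x0" using i1 by (cases L1) simp_all
      then obtain x0 where L1: "L1 = Vert x0" by blast
      have i2: "imult a b L2 Inf \<ge> 1" "imult a b L2 (Aff x1 y1) \<ge> 1" using B(1,2) P Inf by simp_all
      have "\<exists>x0. L2 = Vert x0" using i2 by (cases L2) simp_all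
      then obtain x0' where L2: "L2 = Vert x0'" by blast
      have "x1 = x0" using v_ge1[of a b x0 x1 y1] i1(2) L1 by blast
      moreover have "x1 = x0'" using v_ge1[of a b x0' x1 y1] i2(2) L2 by blast
      ultimately show ?thesis using L1 L2 by simp
    next
      case (Aff x2 y2)
      note Q = this
      have a1: "imult a b L1 (Aff x1 y1) \<ge> 1" using A(1) P by simp
      have a2: "imult a b L1 (Aff x2 y2) \<ge> 1" using A(2) Q by simp
      have b1: "imult a b L2 (Aff x1 y1) \<ge> 1" using B(1) P by simp
      have b2: "imult a b L2 (Aff x2 y2) \<ge> 1" using B(2) Q by simp
      have a3: "x1 = x2 \<Longrightarrow> y1 = y2 \<Longrightarrow> imult a b L1 (Aff x1 y1) \<ge> 2" using A(3) P Q by simp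
      have b3: "x1 = x2 \<Longrightarrow> y1 = y2 \<Longrightarrow> imult a b L2 (Aff x1 y1) \<ge> 2" using B(3) P Q by simp
      have NV: "y1 = m*x1+c \<and> y2 = m*x2+c \<and> y1^2 = cubic_rhs a b x1 \<and>
          (x1 = x2 \<longrightarrow> y1 = y2 \<and> 3*x1^2 + 2*a*x1 + b = 2*m*y1)"
        if "L = NonVert m c" "imult a b L (Aff x1 y1) \<ge> 1" "imult a b L (Aff x2 y2) \<ge> 1"
           "x1 = x2 \<Longrightarrow> y1 = y2 \<Longrightarrow> imult a b L (Aff x1 y1) \<ge> 2" for L m c
      proof -
        have i1: "imult a b (NonVert m c) (Aff x1 y1) \<ge> 1" using that by simp
        have i2: "imult a b (NonVert m c) (Aff x2 y2) \<ge> 1" using that by simp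
        note e1 = nv_ge1[OF i1] and e2 = nv_ge1[OF i2]
        have "x1 = x2 \<Longrightarrow> y1 = y2" using e1(1) e2(1) by simp
        moreover have "x1 = x2 \<Longrightarrow> y1 = y2 \<Longrightarrow> 3*x1^2 + 2*a*x1 + b = 2*m*y1"
        proof -
          assume "x1 = x2" "y1 = y2"
          then have "imult a b (NonVert m c) (Aff x1 y1) \<ge> 2" using that by simp
          then show ?thesis by (rule nv_ge2)
        qed
        ultimately show ?thesis using e1 e2 by blast
      qed
      have VV: "x1 = x0 \<and> x2 = x0 \<and> (x1 = x2 \<longrightarrow> y1 = y2 \<longrightarrow> y1 = 0)"
        if "L = Vert x0" "imult a b L (Aff x1 y1) \<ge> 1" "imult a b L (Aff x2 y2) \<ge> 1"
           "x1 = x2 \<Longrightarrow> y1 = y2 \<Longrightarrow> imult a b L (Aff x1 y1) \<ge> 2" for L x0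
      proof -
        have i1: "imult a b (Vert x0) (Aff x1 y1) \<ge> 1" using that by simp
        have i2: "imult a b (Vert x0) (Aff x2 y2) \<ge> 1" using that by simp
        have "x1 = x2 \<Longrightarrow> y1 = y2 \<Longrightarrow> y1 = 0"
        proof -
          assume "x1 = x2" "y1 = y2"
          then have "imult a b (Vert x0) (Aff x1 y1) \<ge> 2" using that by simp
          then show ?thesis by (rule v_ge2)
        qed
        then show ?thesis using v_ge1[OF i1] v_ge1[OF i2] by blast
      qed
      have notLI1: "L1 \<noteq> LInf"
      proof
        assume "L1 = LInf" with a1 show False by simp
      qed
      have notLI2: "L2 \<noteq> LInf"
      proof
        assume "L2 = LInf" with b1 show False by simp
      qed
      show ?thesis
      proof (cases L1)
        case (NonVert m c)
        note L1 = this
        note N1 = NV[OF L1 a1 a2 a3]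
        show ?thesis
        proof (cases L2)
          case (NonVert m' c')
          note L2 = this
          note N2 = NV[OF L2 b1 b2 b3]
          show ?thesis
          proof (cases "x1 = x2")
            case False
            have "y1 = m*x1+c" "y2 = m*x2+c" "y1 = m'*x1+c'" "y2 = m'*x2+c'" using N1 N2 by blast+
            then have "m * x1 + c = m' * x1 + c'" "m * x2 + c = m' * x2 + c'" by argo+
            then have "(m - m') * (x1 - x2) = 0" by (simp add: algebra_simps)
            then have mm: "m = m'" using False by simp
            then have "c = c'" using \<open>m * x1 + c = m' * x1 + c'\<close> by simp
            then show ?thesis using mm L1 L2 by simp
          next
            case True
            have d1: "3*x1^2 + 2*a*x1 + b = 2*m*y1" using N1 True by blast
            have d2: "3*x1^2 + 2*a*x1 + b = 2*m'*y1" using N2 True by blast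
            have c1: "y1^2 = cubic_rhs a b x1" using N1 by blast
            have "y1 \<noteq> 0" using nonsing_pt[OF ns c1 d1] .
            then have mm: "m = m'" using d1 d2 by simp
            have "y1 = m*x1+c" "y1 = m'*x1+c'" using N1 N2 by blast+
            then have "m * x1 + c = m' * x1 + c'" by argo
            then have "c = c'" using mm by simp
            then show ?thesis using mm L1 L2 by simp
          qed
        next
          case (Vert x0)
          note V2 = VV[OF this b1 b2 b3]
          have T: "x1 = x2" using V2 by metis
          then have y: "y1 = y2" using N1 by blast
          have d1: "3*x1^2 + 2*a*x1 + b = 2*m*y1" using N1 T by blast
          have c1: "y1^2 = cubic_rhs a b x1" using N1 by blast
          have "y1 = 0" using V2 T y by blast
          then show ?thesis using nonsing_pt[OF ns c1 d1] by simp
        next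
          case LInf
          then show ?thesis using notLI2 by simp
        qed
      next
        case (Vert x0)
        note L1 = this
        note V1 = VV[OF L1 a1 a2 a3]
        show ?thesis
        proof (cases L2)
          case (NonVert m c)
          note N2 = NV[OF this b1 b2 b3]
          have T: "x1 = x2" using V1 by metis
          then have y: "y1 = y2" using N2 by blast
          have d1: "3*x1^2 + 2*a*x1 + b = 2*m*y1" using N2 T by blast
          have c1: "y1^2 = cubic_rhs a b x1" using N2 by blast
          have "y1 = 0" using V1 T y by blast
          then show ?thesis using nonsing_pt[OF ns c1 d1] by simp
        next
          case (Vert x0')
          note V2 = VV[OF this b1 b2 b3]
          have "x0 = x0'" using V1 V2 by metis
          then show ?thesis using L1 \<open>L2 = Vert x0'\<close> by simp
        next
          case LInf
          then show ?thesis using notLI2 by simp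
        qed
      next
        case LInf
        then show ?thesis using notLI1 by simp
      qed
    qed
  qed
qed

definition third :: "real \<Rightarrow> real \<Rightarrow> point \<Rightarrow> point \<Rightarrow> point \<Rightarrow> bool" where
  "third a b P Q R \<longleftrightarrow> (\<exists>L. \<forall>X. imult a b L X = count {#P, Q, R#} X)"

lemma third_unique:
  assumes ns: "nonsingular a b" and "third a b P Q R" "third a b P Q R'"
  shows "R = R'"
proof -
  obtain L where L: "\<forall>X. imult a b L X = count {#P, Q, R#} X" using assms(2) third_def by auto
  obtain L' where L': "\<forall>X. imult a b L' X = count {#P, Q, R'#} X" using assms(3) third_def by auto
  have "thr a b L P Q" using L unfolding thr_def by simp
  moreover have "thr a b L' P Q" using L' unfolding thr_def by simp
  ultimately have "L = L'" using line_unique[OF ns] by blast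
  then have "\<forall>X. count {#P, Q, R#} X = count {#P, Q, R'#} X" using L L' by simp
  then have "{#P, Q, R#} = {#P, Q, R'#}" by (simp add: multiset_eq_iff)
  then show ?thesis by simp
qed

lemma sharp_eq:
  assumes ns: "nonsingular a b" and "third a b P Q R"
  shows "sharp a b P Q = R"
  unfolding sharp_def
proof (rule the_equality)
  show "\<exists>L. \<forall>X. imult a b L X = count {#P, Q, R#} X" using assms(2) third_def by simp
next
  fix R' assume "\<exists>L. \<forall>X. imult a b L X = count {#P, Q, R'#} X"
  then have "third a b P Q R'" using third_def by simp
  then show "R' = R" using third_unique[OF ns] assms(2) by blast
qed

lemma third_perm:
  assumes "third a b P Q R" "{#P, Q, R#} = {#P', Q', R'#}"
  shows "third a b P' Q' R'"
  using assms unfolding third_def by metis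

lemma third_linf: "third a b Inf Inf Inf"
  unfolding third_def using imult_linf by blast

lemma third_vert:
  assumes "y^2 = cubic_rhs a b x"
  shows "third a b Inf (Aff x y) (Aff x (-y))"
  unfolding third_def using imult_vert[OF assms] by blast

lemma third_nonvert:
  assumes "a - m^2 = -(x1+x2+x3)" "b - 2*m*c = x1*x2+x1*x3+x2*x3" "-(c^2) = -(x1*x2*x3)"
    "y1 = m*x1+c" "y2 = m*x2+c" "y3 = m*x3+c"
  shows "third a b (Aff x1 y1) (Aff x2 y2) (Aff x3 y3)"
  unfolding third_def using imult_nonvert[OF assms] by blast

lemma imult_on_curve:
  assumes "imult a b L X \<ge> 1"
  shows "on_curve a b X"
proof (cases X)
  case Inf
  then show ?thesis by simp
next
  case (Aff x y)
  show ?thesis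
  proof (cases L)
    case (NonVert m c)
    then show ?thesis using nv_ge1(2)[of a b m c x y] assms Aff by simp
  next
    case (Vert x0)
    have x: "x = x0" using v_ge1[of a b x0 x y] assms Aff Vert by blast
    have i: "order y [: - cubic_rhs a b x0, 0, 1 :] \<ge> 1" using assms Aff Vert x by simp
    have "poly [: - cubic_rhs a b x0, 0, 1 :] y = 0" by (rule ord_ge1) (use i in auto)
    then show ?thesis using Aff x by (simp add: power2_eq_square)
  next
    case LInf
    then show ?thesis using assms Aff by simp
  qed
qed

lemma third_on_curve:
  assumes "third a b P Q R"
  shows "on_curve a b R"
proof -
  obtain L where L: "\<forall>X. imult a b L X = count {#P, Q, R#} X" using assms third_def by auto
  have "imult a b L R \<ge> 1" using L by simp
  then show ?thesis by (rule imult_on_curve)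
qed

lemma nonsing_b: "nonsingular a b \<Longrightarrow> b \<noteq> 0"
  unfolding nonsingular_def cubic_rhs_def by (metis mult_zero_right power_zero_numeral add_0 mult_zero_left)

lemma sharp_inf_inf: "nonsingular a b \<Longrightarrow> sharp a b Inf Inf = Inf"
  using sharp_eq third_linf by blast

lemma sharp_inf_aff: "nonsingular a b \<Longrightarrow> y^2 = cubic_rhs a b x \<Longrightarrow> sharp a b Inf (Aff x y) = Aff x (-y)"
  using sharp_eq third_vert by blast

lemma third_T_inf: "third a b (Aff 0 0) Inf (Aff 0 0)"
proof -
  have "third a b Inf (Aff 0 0) (Aff 0 (-0))" by (rule third_vert) (simp add: cubic_rhs_def)
  then show ?thesis by (rule third_perm) simp
qed

lemma third_T_T: "third a b (Aff 0 0) (Aff 0 0) Inf"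
  by (rule third_perm[OF third_T_inf]) (simp add: add_mset_commute)

lemma conj_inf: "nonsingular a b \<Longrightarrow> conj_pt a b Inf = T_pt"
  unfolding conj_pt_def cadd_def T_pt_def
  using sharp_eq[OF _ third_T_inf] sharp_inf_aff[of a b 0 0] by (simp add: cubic_rhs_def)

lemma conj_T: "nonsingular a b \<Longrightarrow> conj_pt a b T_pt = Inf"
  unfolding conj_pt_def cadd_def T_pt_def
  using sharp_eq[OF _ third_T_T] sharp_inf_inf by simp

lemma conj_aff:
  assumes ns: "nonsingular a b" and hy: "y^2 = cubic_rhs a b x" and x: "x \<noteq> 0"
  shows "conj_pt a b (Aff x y) = Aff (b/x) (-(b*y/x^2))"
proof -
  have t: "third a b (Aff 0 0) (Aff x y) (Aff (b/x) (b*y/x^2))"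
  proof (rule third_nonvert[where m = "y/x" and c = 0])
    have "(y/x)^2 = y^2/x^2" by (simp add: power_divide)
    also have "\<dots> = x + a + b/x" using hy x by (simp add: cubic_rhs_def field_simps power2_eq_square power3_eq_cube)
    finally show "a - (y/x)^2 = -(0 + x + b/x)" by simp
  qed (use x in \<open>auto simp: field_simps power2_eq_square\<close>)
  have s1: "sharp a b (Aff 0 0) (Aff x y) = Aff (b/x) (b*y/x^2)" by (rule sharp_eq[OF ns t])
  have oc: "on_curve a b (Aff (b/x) (b*y/x^2))" using third_on_curve[OF t] .
  show ?thesis unfolding conj_pt_def cadd_def T_pt_def s1
    using sharp_inf_aff[OF ns] oc by simp
qed

lemma third_tangent:
  assumes hy: "y^2 = cubic_rhs a b x" and hm: "2*m*y = 3*x^2+2*a*x+b"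
    and hc: "c = y - m*x" and h3: "x3 = m^2 - a - 2*x"
  shows "third a b (Aff x y) (Aff x y) (Aff x3 (m*x3+c))"
proof (rule third_nonvert)
  show "a - m^2 = -(x+x+x3)" using h3 by simp
  have u1: "2*m*c = 2*m*y - 2*(m^2*x)" unfolding hc by (simp add: algebra_simps power2_eq_square)
  have u2: "x*x + x*x3 + x*x3 = 2*(m^2*x) - 3*x^2 - 2*a*x" unfolding h3 by (simp add: algebra_simps power2_eq_square)
  show "b - 2*m*c = x*x + x*x3 + x*x3" using u1 u2 hm by linarith
  have "c^2 = y^2 - x*(2*m*y) + m^2*x^2" unfolding hc by (simp add: algebra_simps power2_eq_square)
  also have "\<dots> = x*x*x3" unfolding hy hm h3 by (simp add: cubic_rhs_def algebra_simps power2_eq_square power3_eq_cube)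
  finally show "-(c^2) = -(x*x*x3)" by simp
qed (use hc in auto)

lemma third_chord:
  assumes h1: "y1^2 = cubic_rhs a b x1" and h2: "y2^2 = cubic_rhs a b x2" and ne: "x1 \<noteq> x2"
    and hm: "m*(x2-x1) = y2-y1" and hc: "c = y1 - m*x1" and h3: "x3 = m^2 - a - x1 - x2"
  shows "third a b (Aff x1 y1) (Aff x2 y2) (Aff x3 (m*x3+c))"
proof -
  define p where "p = a - m^2"
  define q where "q = b - 2*m*c"
  have e1: "y1 = m*x1+c" using hc by simp
  have e2: "y2 = m*x2+c" using hc hm by (simp add: algebra_simps)
  have g1: "x1^3 + p*x1^2 + q*x1 - c^2 = 0"
    using h1 e1 unfolding p_def q_def cubic_rhs_def by (simp add: algebra_simps power2_eq_square power3_eq_cube)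
  have g2: "x2^3 + p*x2^2 + q*x2 - c^2 = 0"
    using h2 e2 unfolding p_def q_def cubic_rhs_def by (simp add: algebra_simps power2_eq_square power3_eq_cube)
  have "(x1-x2)*(x1^2+x1*x2+x2^2 + p*(x1+x2) + q) = (x1^3 + p*x1^2 + q*x1 - c^2) - (x2^3 + p*x2^2 + q*x2 - c^2)"
    by (simp add: algebra_simps power2_eq_square power3_eq_cube)
  also have "\<dots> = 0" using g1 g2 by simp
  finally have "x1^2+x1*x2+x2^2 + p*(x1+x2) + q = 0" using ne by simp
  then have hq: "q = -(x1^2+x1*x2+x2^2) - p*(x1+x2)" by simp
  have h3': "x3 = -p - x1 - x2" using h3 p_def by simp
  show ?thesis
  proof (rule third_nonvert)
    show "a - m^2 = -(x1+x2+x3)" using h3 by simp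
    have u1: "x1*x2 + x1*x3 + x2*x3 = -(x1^2+x1*x2+x2^2) - p*(x1+x2)" unfolding h3' by (simp add: algebra_simps power2_eq_square)
    show "b - 2*m*c = x1*x2 + x1*x3 + x2*x3" using u1 hq unfolding q_def by linarith
    have "c^2 = x1^3 + p*x1^2 + q*x1" using g1 by simp
    also have "\<dots> = x1*x2*x3" unfolding hq h3' by (simp add: algebra_simps power2_eq_square power3_eq_cube)
    finally show "-(c^2) = -(x1*x2*x3)" by simp
  qed (use e1 e2 in auto)
qed

lemma generic:
  assumes ns: "nonsingular a b" and hy: "y^2 = cubic_rhs a b x" and x0: "x \<noteq> 0" and y0: "y \<noteq> 0"
    and hu: "b/x \<noteq> x" and hB: "third a b (Aff x y) (Aff (b/x) (-(b*y/x^2))) B"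
  shows "sharp a b (Aff x y) (Aff x y) = conj_pt a b B"
proof -
  define u where "u = b/x"
  define V where "V = -(b*y/x^2)"
  define s where "s = b - x^2"
  define g where "g = x^2 + a*x + b"
  have b0: "b \<noteq> 0" using nonsing_b[OF ns] .
  have s0: "s \<noteq> 0" using hu x0 unfolding s_def by (auto simp: field_simps power2_eq_square)
  have hyg: "y^2 = x*g" using hy unfolding cubic_rhs_def g_def by (simp add: algebra_simps power2_eq_square power3_eq_cube)
  have g0: "g \<noteq> 0" using hyg y0 by auto
  have ux: "u \<noteq> x" using hu u_def by simp
  have hV: "V^2 = cubic_rhs a b u"
  proof -
    have "third a b (Aff x y) B (Aff u V)" using third_perm[OF hB] u_def V_def by (simp add: add_mset_commute)
    then show ?thesis using third_on_curve by fastforce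
  qed
  define m where "m = -y*(b+x^2)/(x*s)"
  have hm: "m*(u-x) = V - y"
    unfolding m_def u_def V_def s_def using x0 s0 unfolding s_def by (simp add: field_simps power2_eq_square)
  define c where "c = y - m*x"
  have c': "c = 2*b*y/s"
    unfolding c_def m_def using x0 s0 unfolding s_def by (simp add: field_simps power2_eq_square)
  define x3 where "x3 = m^2 - a - x - u"
  have m2: "m^2 = y^2*(b+x^2)^2/(x^2*s^2)" unfolding m_def by (simp add: power_divide power_mult_distrib)
  have x3': "x3 = 4*b*x*g/s^2"
  proof -
    have "x3 = x*g*(b+x^2)^2/(x^2*s^2) - a - x - b/x" unfolding x3_def m2 hyg u_def by simp
    also have "\<dots> = 4*b*x*g/s^2" using x0 s0
      apply (simp add: field_simps power2_eq_square)
      apply (simp add: s_def g_def algebra_simps power2_eq_square)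
      done
    finally show ?thesis .
  qed
  define y3 where "y3 = m*x3 + c"
  have y3': "y3 = y*(2*b*s^2 - 4*b*(b+x^2)*g)/s^3"
    unfolding y3_def x3' c' m_def using x0 s0 by (simp add: field_simps power2_eq_square power3_eq_cube)
  have t: "third a b (Aff x y) (Aff u V) (Aff x3 y3)"
    unfolding y3_def by (rule third_chord[OF hy hV]) (use ux hm c_def x3_def in auto)
  have BB: "B = Aff x3 y3" using third_unique[OF ns hB t[unfolded u_def V_def]] by simp
  have x30: "x3 \<noteq> 0" unfolding x3' using b0 x0 g0 s0 by simp
  have hy3: "y3^2 = cubic_rhs a b x3" using third_on_curve[OF t] by simp
  have cB: "conj_pt a b B = Aff (b/x3) (-(b*y3/x3^2))" unfolding BB by (rule conj_aff[OF ns hy3 x30])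
  define fp where "fp = 3*x^2 + 2*a*x + b"
  define m' where "m' = fp/(2*y)"
  define c' where "c' = y - m'*x"
  define x4 where "x4 = m'^2 - a - 2*x"
  have hm': "2*m'*y = 3*x^2 + 2*a*x + b" unfolding m'_def fp_def using y0 by simp
  have sA: "sharp a b (Aff x y) (Aff x y) = Aff x4 (m'*x4 + c')"
    by (rule sharp_eq[OF ns third_tangent[OF hy hm' c'_def x4_def]])
  have polyid1: "fp^2 - 4*x*g*(a+2*x) = s^2" unfolding fp_def g_def s_def
    by (simp add: algebra_simps power2_eq_square)
  have x4': "x4 = s^2/(4*x*g)"
  proof -
    have "m'^2 = fp^2/(4*(x*g))" unfolding m'_def by (simp add: power_divide power_mult_distrib hyg)
    then have "x4 = fp^2/(4*(x*g)) - a - 2*x" unfolding x4_def by simp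
    also have "\<dots> = (fp^2 - 4*x*g*(a+2*x))/(4*x*g)" using x0 g0 by (simp add: field_simps)
    finally show ?thesis unfolding polyid1 .
  qed
  have ex: "x4 = b/x3" unfolding x4' x3' using x0 g0 s0 b0 by (simp add: field_simps power2_eq_square)
  have polyid2: "8*x^2*g^2 + fp*(s^2 - 4*x^2*g) = -s*(s^2 - 2*(b+x^2)*g)" unfolding fp_def g_def s_def
    by (simp add: algebra_simps power2_eq_square)
  have m'y: "m' = fp*y/(2*x*g)"
  proof -
    have "m' = fp*y/(2*y^2)" unfolding m'_def using y0 by (simp add: field_simps power2_eq_square)
    then show ?thesis unfolding hyg by (simp add: mult.assoc)
  qed
  have ey1: "m'*x4 + c' = y*(8*x^2*g^2 + fp*(s^2 - 4*x^2*g))/(8*x^2*g^2)"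
    unfolding c'_def m'y x4' using x0 g0 by (simp add: field_simps power2_eq_square)
  have ey: "m'*x4 + c' = -(b*y3/x3^2)"
    unfolding ey1 polyid2 y3' x3' using x0 g0 s0 b0 by (simp add: field_simps power2_eq_square power3_eq_cube)
  show ?thesis unfolding sA cB using ex ey by simp
qed

theorem fact7:
  fixes a b :: real and A B :: point
  assumes "nonsingular a b"
    and "on_curve a b A" and "on_curve a b B"
    and "\<exists>L. \<forall>X. imult a b L X = count {#A, conj_pt a b A, B#} X"
  shows "sharp a b A A = conj_pt a b B"
proof -
  note ns = assms(1)
  have H: "third a b A (conj_pt a b A) B" using assms(4) unfolding third_def .
  have b0: "b \<noteq> 0" using nonsing_b[OF ns] .
  have tTi: "third a b Inf (Aff 0 0) (Aff 0 0)"
    by (rule third_perm[OF third_T_inf]) (simp add: add_mset_commute)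
  show ?thesis
  proof (cases A)
    case Inf
    have "third a b Inf (Aff 0 0) B" using H Inf conj_inf[OF ns] unfolding T_pt_def by simp
    then have BT: "B = Aff 0 0" using third_unique[OF ns _ tTi] by blast
    show ?thesis using Inf BT sharp_inf_inf[OF ns] conj_T[OF ns] unfolding T_pt_def by simp
  next
    case (Aff x y)
    have hy: "y^2 = cubic_rhs a b x" using assms(2) Aff by simp
    define g where "g = x^2 + a*x + b"
    have hyg: "y^2 = x*g" using hy unfolding cubic_rhs_def g_def by (simp add: algebra_simps power2_eq_square power3_eq_cube)
    show ?thesis
    proof (cases "x = 0")
      case True
      then have "y = 0" using hyg by simp
      then have AT: "A = Aff 0 0" using Aff True by simp
      have "third a b (Aff 0 0) Inf B" using H AT conj_T[OF ns] unfolding T_pt_def by simp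
      then have BT: "B = Aff 0 0" using third_unique[OF ns _ third_T_inf] by blast
      show ?thesis using AT BT sharp_eq[OF ns third_T_T] conj_T[OF ns] unfolding T_pt_def by simp
    next
      case False
      note x0 = False
      have cA: "conj_pt a b A = Aff (b/x) (-(b*y/x^2))" using conj_aff[OF ns hy x0] Aff by simp
      have H': "third a b (Aff x y) (Aff (b/x) (-(b*y/x^2))) B" using H cA Aff by simp
      have hV: "(-(b*y/x^2))^2 = cubic_rhs a b (b/x)"
      proof -
        have "third a b (Aff x y) B (Aff (b/x) (-(b*y/x^2)))" using third_perm[OF H'] by (simp add: add_mset_commute)
        then show ?thesis using third_on_curve by fastforce
      qed
      show ?thesis
      proof (cases "b/x = x")
        case True
        then have bx: "b = x^2" using x0 by (simp add: field_simps power2_eq_square)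
        show ?thesis
        proof (cases "y = 0")
          case True
          then have "g = 0" using hyg x0 by simp
          then have "a*x = -2*b" unfolding g_def using bx by simp
          then have "3*x^2 + 2*a*x + b = 0" using bx by simp
          then show ?thesis using ns hy True unfolding nonsingular_def by auto
        next
          case False
          note y0 = False
          have "b*y/x^2 = y" using bx x0 by simp
          then have H2: "third a b (Aff x y) (Aff x (-y)) B" using H' True by simp
          have t2: "third a b (Aff x y) (Aff x (-y)) Inf"
            by (rule third_perm[OF third_vert[OF hy]]) (simp add: add_mset_commute)
          have BI: "B = Inf" using third_unique[OF ns H2 t2] .
          have e1: "2*(y/x)*y = 3*x^2 + 2*a*x + b"
          proof -
            have "2*(y/x)*y = 2*y^2/x" by (simp add: power2_eq_square)
            also have "\<dots> = 2*g" unfolding hyg using x0 by simp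
            finally show ?thesis unfolding g_def using bx by simp
          qed
          have e2: "(0::real) = y - (y/x)*x" using x0 by simp
          have e3: "(0::real) = (y/x)^2 - a - 2*x"
          proof -
            have "(y/x)^2 = y^2/x^2" by (simp add: power_divide)
            also have "\<dots> = g/x" unfolding hyg using x0 by (simp add: power2_eq_square)
            also have "\<dots> = x + a + b/x" unfolding g_def using x0 by (simp add: field_simps power2_eq_square)
            finally show ?thesis using True by simp
          qed
          have "sharp a b (Aff x y) (Aff x y) = Aff 0 ((y/x)*0 + 0)"
            by (rule sharp_eq[OF ns third_tangent[OF hy e1 e2 e3]])
          then show ?thesis using Aff BI conj_inf[OF ns] unfolding T_pt_def by simp
        qed
      next
        case False
        note ux = False
        show ?thesis
        proof (cases "y = 0")
          case True
          then have g0: "g = 0" using hyg x0 by simp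
          have e3: "(0::real) = 0^2 - a - x - b/x"
          proof -
            have "x + a + b/x = g/x" unfolding g_def using x0 by (simp add: field_simps power2_eq_square)
            then show ?thesis using g0 by simp
          qed
          have hV0: "0^2 = cubic_rhs a b (b/x)" using hV True by simp
          have hy0: "0^2 = cubic_rhs a b x" using hy True by simp
          have t: "third a b (Aff x 0) (Aff (b/x) 0) (Aff 0 (0*0+0))"
            by (rule third_chord[OF hy0 hV0]) (use ux e3 in auto)
          have "third a b (Aff x 0) (Aff (b/x) 0) B" using H' True by simp
          then have BT: "B = Aff 0 0" using third_unique[OF ns _ t] by simp
          have t2: "third a b (Aff x 0) (Aff x 0) Inf"
            by (rule third_perm[OF third_vert[OF hy0]]) (simp add: add_mset_commute)
          show ?thesis using Aff True BT sharp_eq[OF ns t2] conj_T[OF ns] unfolding T_pt_def by simp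
        next
          case False
          show ?thesis using generic[OF ns hy x0 False ux H'] Aff by simp
        qed
      qed
    qed
  qed
qed

end
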